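(* Fix $m\ge2$, $0<\epsilon<1/64$ and $B=\lfloor m/2\rfloor$. Suppose that for some integer $k\ge1$ there is a panel decision function $\widetilde x:\mathcal L^k\to\mathcal X_B$ such that for every participatory budgeting instance $\langle m,B,(\mathrm{Cost}_1,\dots,\mathrm{Cost}_n)\rangle$ (with $n\ge k$), $$\mathbb E_{S\sim\mathcal U_{k,n}}\big[\textsc{Social-Cost}(\widetilde x(S))\big]\le\textsc{Social-Opt}+\epsilon .$$ Then $k\ge c\, m/\epsilon^2$ for an absolute constant $c>0$ (i.e., $k=\Omega(m\cdot(1/\epsilon)^2)$).
   Context: A participatory budgeting instance $\langle m,B,(\mathrm{Cost}_1,\dots,\mathrm{Cost}_n)\rangle$: $m$ projects, budget $B>0$, and for each agent $i\in[n]$ a cost function $\mathrm{Cost}_i:[0,1]^m\to[0,1]$ that is monotone (non-increasing when the allocation increases coordinatewise) and $1$-Lipschitz w.r.t. $\|\cdot\|_1$. $\mathcal L$ denotes the set of all such $1$-Lipschitz functions $[0,1]^m\to[0,1]$, and $\mathcal X_B=\{x\in[0,1]^m:\sum_jx_j\le B\}$. For a panel $S$ of size $k$, $\widetilde x(S)$ denotes $\widetilde x$ applied to $(\mathrm{Cost}_i)_{i\in S}$. $\textsc{Social-Cost}(x)=\frac1n\sum_i\mathrm{Cost}_i(x)$ and $\textsc{Social-Opt}=\min_{x\in\mathcal X_B}\textsc{Social-Cost}(x)$. $\mathcal U_{k,n}$ is the uniform distribution over size-$k$ subsets of $[n]$. *)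

theory Defs
  imports "HOL-Analysis.Analysis"
begin

text \<open>Allocations in [0,1]^m are encoded as functions nat => real that vanish
  outside the index range {0..<m}.\<close>

type_synonym alloc = "nat \<Rightarrow> real"
type_synonym costfn = "alloc \<Rightarrow> real"

definition cube :: "nat \<Rightarrow> alloc set" where
  "cube m = {x. (\<forall>j<m. 0 \<le> x j \<and> x j \<le> 1) \<and> (\<forall>j\<ge>m. x j = 0)}"

definition alloc_space :: "nat \<Rightarrow> real \<Rightarrow> alloc set" where
  "alloc_space m B = {x \<in> cube m. (\<Sum>j<m. x j) \<le> B}"

definition lip_class :: "nat \<Rightarrow> costfn set" where
  "lip_class m = {f. (\<forall>x\<in>cube m. 0 \<le> f x \<and> f x \<le> 1) \<and>
     (\<forall>x\<in>cube m. \<forall>y\<in>cube m. \<bar>f x - f y\<bar> \<le> (\<Sum>j<m. \<bar>x j - y j\<bar>))}"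

definition pb_cost :: "nat \<Rightarrow> costfn \<Rightarrow> bool" where
  "pb_cost m f \<longleftrightarrow> f \<in> lip_class m \<and>
     (\<forall>x\<in>cube m. \<forall>y\<in>cube m. (\<forall>j<m. x j \<le> y j) \<longrightarrow> f y \<le> f x)"

definition social_cost :: "nat \<Rightarrow> (nat \<Rightarrow> costfn) \<Rightarrow> alloc \<Rightarrow> real" where
  "social_cost n Cost x = (\<Sum>i<n. Cost i x) / real n"

definition social_opt :: "nat \<Rightarrow> real \<Rightarrow> nat \<Rightarrow> (nat \<Rightarrow> costfn) \<Rightarrow> real" where
  "social_opt m B n Cost = (INF x\<in>alloc_space m B. social_cost n Cost x)"

definition panel_decision :: "(costfn list \<Rightarrow> alloc) \<Rightarrow> (nat \<Rightarrow> costfn) \<Rightarrow> nat set \<Rightarrow> alloc" where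
  "panel_decision xt Cost S = xt (map Cost (sorted_list_of_set S))"

definition panels :: "nat \<Rightarrow> nat \<Rightarrow> nat set set" where
  "panels k n = {S. S \<subseteq> {..<n} \<and> card S = k}"

definition expected_panel_cost ::
  "nat \<Rightarrow> (costfn list \<Rightarrow> alloc) \<Rightarrow> nat \<Rightarrow> (nat \<Rightarrow> costfn) \<Rightarrow> real" where
  "expected_panel_cost k xt n Cost =
     (\<Sum>S\<in>panels k n. social_cost n Cost (panel_decision xt Cost S)) / real (card (panels k n))"

end

theory Submission
  imports Defs
begin


definition EE :: "(nat \<Rightarrow> real) \<Rightarrow> nat set \<Rightarrow> nat set \<Rightarrow> ((nat \<Rightarrow> nat) \<Rightarrow> real) \<Rightarrow> real" where
  "EE p J A h = (\<Sum>\<tau>\<in>PiE A (\<lambda>_. J). (\<Prod>i\<in>A. p (\<tau> i)) * h \<tau>)"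

lemma EE_insert:
  assumes "finite A" "i \<notin> A"
  shows "EE p J (insert i A) h = (\<Sum>j\<in>J. p j * EE p J A (\<lambda>\<rho>. h (\<rho>(i:=j))))"
proof -
  let ?c = "\<lambda>(y::nat, g::nat\<Rightarrow>nat). g(i := y)"
  have "EE p J (insert i A) h = (\<Sum>\<tau>\<in>?c ` (J \<times> PiE A (\<lambda>_. J)). (\<Prod>x\<in>insert i A. p (\<tau> x)) * h \<tau>)"
    unfolding EE_def PiE_insert_eq ..
  also have "\<dots> = (\<Sum>yg\<in>J \<times> PiE A (\<lambda>_. J). (\<Prod>x\<in>insert i A. p (?c yg x)) * h (?c yg))"
    using inj_combinator[OF assms(2), of "\<lambda>_. J"] by (subst sum.reindex) (auto simp: o_def)
  also have "\<dots> = (\<Sum>j\<in>J. \<Sum>g\<in>PiE A (\<lambda>_. J). (\<Prod>x\<in>insert i A. p ((g(i:=j)) x)) * h (g(i:=j)))"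
    by (subst sum.cartesian_product) (simp add: case_prod_unfold)
  also have "\<dots> = (\<Sum>j\<in>J. \<Sum>g\<in>PiE A (\<lambda>_. J). p j * ((\<Prod>x\<in>A. p (g x)) * h (g(i:=j))))"
  proof (intro sum.cong refl)
    fix j g
    have "(\<Prod>x\<in>insert i A. p ((g(i:=j)) x)) = p j * (\<Prod>x\<in>A. p ((g(i:=j)) x))"
      using assms by simp
    also have "(\<Prod>x\<in>A. p ((g(i:=j)) x)) = (\<Prod>x\<in>A. p (g x))"
      using assms by (intro prod.cong) auto
    finally show "(\<Prod>x\<in>insert i A. p ((g(i:=j)) x)) * h (g(i:=j)) = p j * ((\<Prod>x\<in>A. p (g x)) * h (g(i:=j)))"
      by simp
  qed
  also have "\<dots> = (\<Sum>j\<in>J. p j * EE p J A (\<lambda>\<rho>. h (\<rho>(i:=j))))"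
    unfolding EE_def by (simp add: sum_distrib_left)
  finally show ?thesis .
qed

lemma EE_const:
  assumes "finite A" "finite J" "sum p J = 1"
  shows "EE p J A (\<lambda>_. c) = c"
proof -
  have "EE p J A (\<lambda>_. c) = (\<Sum>\<tau>\<in>PiE A (\<lambda>_. J). (\<Prod>i\<in>A. p (\<tau> i))) * c"
    unfolding EE_def by (simp add: sum_distrib_right)
  also have "(\<Sum>\<tau>\<in>PiE A (\<lambda>_. J). (\<Prod>i\<in>A. p (\<tau> i))) = (\<Prod>i\<in>A. \<Sum>j\<in>J. p j)"
    using prod_sum_PiE[of A "\<lambda>_. J" "\<lambda>_ j. p j"] assms by simp
  finally show ?thesis using assms by simp
qed

lemma EE_add: "EE p J A (\<lambda>\<tau>. f \<tau> + g \<tau>) = EE p J A f + EE p J A g"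
  unfolding EE_def by (simp add: distrib_left sum.distrib)

lemma EE_diff: "EE p J A (\<lambda>\<tau>. f \<tau> - g \<tau>) = EE p J A f - EE p J A g"
  unfolding EE_def by (simp add: right_diff_distrib sum_subtractf)

lemma EE_scale: "EE p J A (\<lambda>\<tau>. c * f \<tau>) = c * EE p J A f"
  unfolding EE_def by (simp add: sum_distrib_left mult.left_commute)

lemma EE_sum: "EE p J A (\<lambda>\<tau>. \<Sum>x\<in>X. f x \<tau>) = (\<Sum>x\<in>X. EE p J A (f x))"
  unfolding EE_def by (simp add: sum_distrib_left sum.swap[of _ X])

lemma EE_mono:
  assumes "\<And>j. j \<in> J \<Longrightarrow> p j \<ge> 0" "\<And>\<tau>. \<tau> \<in> PiE A (\<lambda>_. J) \<Longrightarrow> f \<tau> \<le> g \<tau>"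
  shows "EE p J A f \<le> EE p J A g"
  unfolding EE_def
proof (intro sum_mono mult_left_mono)
  fix \<tau> assume t: "\<tau> \<in> PiE A (\<lambda>_. J)"
  show "f \<tau> \<le> g \<tau>" using assms(2)[OF t] .
  show "0 \<le> (\<Prod>i\<in>A. p (\<tau> i))" using t assms(1) by (intro prod_nonneg) auto
qed

lemma EE_restrict:
  assumes "finite C" "B \<inter> C = {}" "finite B" "finite J" "sum p J = 1"
    "\<And>\<tau> i j. i \<in> C \<Longrightarrow> h (\<tau>(i:=j)) = h \<tau>"
  shows "EE p J (B \<union> C) h = EE p J B h"
  using assms
proof (induction C rule: finite_induct)
  case empty then show ?case by simp
next
  case (insert x C)
  have "EE p J (B \<union> insert x C) h = EE p J (insert x (B \<union> C)) h" by simp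
  also have "\<dots> = (\<Sum>j\<in>J. p j * EE p J (B \<union> C) (\<lambda>\<rho>. h (\<rho>(x:=j))))"
    using insert by (intro EE_insert) auto
  also have "\<dots> = (\<Sum>j\<in>J. p j * EE p J (B \<union> C) h)"
  proof -
    have "\<And>\<rho> j. h (\<rho>(x:=j)) = h \<rho>" using insert.prems(5) by blast
    then show ?thesis by simp
  qed
  also have "\<dots> = EE p J (B \<union> C) h" using insert.prems by (simp add: sum_distrib_right[symmetric])
  also have "\<dots> = EE p J B h" using insert by auto
  finally show ?case .
qed

lemma EE_marg1:
  assumes "finite A" "i \<in> A" "finite J" "sum p J = 1"
  shows "EE p J A (\<lambda>\<tau>. f (\<tau> i)) = (\<Sum>j\<in>J. p j * f j)"
proof -
  have A: "A = insert i (A - {i})" using assms by auto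
  have "EE p J A (\<lambda>\<tau>. f (\<tau> i)) = (\<Sum>j\<in>J. p j * EE p J (A - {i}) (\<lambda>\<rho>. f j))"
    by (subst A, subst EE_insert) (use assms in auto)
  then show ?thesis using assms by (simp add: EE_const)
qed

lemma EE_marg2:
  assumes "finite A" "i \<in> A" "i' \<in> A" "i \<noteq> i'" "finite J" "sum p J = 1"
  shows "EE p J A (\<lambda>\<tau>. f (\<tau> i) * g (\<tau> i')) = (\<Sum>j\<in>J. p j * f j) * (\<Sum>j\<in>J. p j * g j)"
proof -
  have A: "A = insert i (A - {i})" using assms by auto
  have "EE p J A (\<lambda>\<tau>. f (\<tau> i) * g (\<tau> i')) = (\<Sum>j\<in>J. p j * EE p J (A - {i}) (\<lambda>\<rho>. f j * g (\<rho> i')))"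
    by (subst A, subst EE_insert) (use assms in auto)
  also have "\<dots> = (\<Sum>j\<in>J. p j * (f j * (\<Sum>j\<in>J. p j * g j)))"
    using assms by (simp add: EE_scale EE_marg1)
  finally show ?thesis by (simp add: sum_distrib_right mult_ac)
qed



definition heavy :: "nat set \<Rightarrow> nat \<Rightarrow> bool" where
  "heavy \<sigma> j \<longleftrightarrow> (even j \<longleftrightarrow> j div 2 \<in> \<sigma>)"

definition pj :: "nat \<Rightarrow> real \<Rightarrow> nat set \<Rightarrow> nat \<Rightarrow> real" where
  "pj T \<delta> \<sigma> j = (if heavy \<sigma> j then 1 + \<delta> else 1 - \<delta>) / (2 * real T)"

definition Hs :: "nat set \<Rightarrow> nat \<Rightarrow> nat" where
  "Hs \<sigma> t = (if t \<in> \<sigma> then 2*t else 2*t+1)"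
definition Ls :: "nat set \<Rightarrow> nat \<Rightarrow> nat" where
  "Ls \<sigma> t = (if t \<in> \<sigma> then 2*t+1 else 2*t)"

definition flip :: "nat \<Rightarrow> nat set \<Rightarrow> nat set" where
  "flip t \<sigma> = (if t \<in> \<sigma> then \<sigma> - {t} else insert t \<sigma>)"

definition Gs :: "nat \<Rightarrow> real \<Rightarrow> nat set \<Rightarrow> alloc \<Rightarrow> real" where
  "Gs T \<delta> \<sigma> x = (\<Sum>j<2*T. pj T \<delta> \<sigma> j * ((if heavy \<sigma> j then 1 else 0) - x j))"

definition Ys :: "nat set \<Rightarrow> nat \<Rightarrow> nat \<Rightarrow> real" where
  "Ys \<sigma> t j = (if j = Hs \<sigma> t then 1 else 0) - (if j = Ls \<sigma> t then 1 else 0)"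

lemma sum_pairs: "(\<Sum>j<2*(T::nat). f j) = (\<Sum>t<T. f (2*t) + f (2*t+1))"
  by (induction T) (auto simp: add_ac)

lemma heavy_H: "heavy \<sigma> (Hs \<sigma> t)" and heavy_L: "\<not> heavy \<sigma> (Ls \<sigma> t)"
  by (auto simp: heavy_def Hs_def Ls_def)

lemma HL_ne: "Hs \<sigma> t \<noteq> Ls \<sigma> t"
  by (auto simp: Hs_def Ls_def)

lemma HL_lt: "t < T \<Longrightarrow> Hs \<sigma> t < 2*T" "t < T \<Longrightarrow> Ls \<sigma> t < 2*T"
  by (auto simp: Hs_def Ls_def)

lemma pj_sum:
  assumes "T \<ge> 1"
  shows "sum (pj T \<delta> \<sigma>) {..<2*T} = 1"
proof -
  have "sum (pj T \<delta> \<sigma>) {..<2*T} = (\<Sum>t<T. 1 / real T)"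
    unfolding sum_pairs
  proof (intro sum.cong refl)
    fix t
    have "heavy \<sigma> (2*t) \<longleftrightarrow> \<not> heavy \<sigma> (2*t+1)" by (auto simp: heavy_def)
    then show "pj T \<delta> \<sigma> (2 * t) + pj T \<delta> \<sigma> (2 * t + 1) = 1 / real T"
      using assms by (auto simp: pj_def field_simps)
  qed
  then show ?thesis using assms by simp
qed

lemma pj_nonneg: "0 \<le> \<delta> \<Longrightarrow> \<delta> \<le> 1 \<Longrightarrow> 0 \<le> pj T \<delta> \<sigma> j"
  by (auto simp: pj_def)

lemma G_lower:
  assumes x: "x \<in> alloc_space m (real T)" and m: "2*T \<le> m" and T: "T \<ge> 1" and d: "0 < \<delta>" "\<delta> \<le> 1"
  shows "Gs T \<delta> \<sigma> x \<ge> (\<delta> / T) * (\<Sum>t<T. 1 - x (Hs \<sigma> t))"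
proof -
  let ?l = "(1 - \<delta>) / (2 * real T)"
  have "Gs T \<delta> \<sigma> x = (\<Sum>t<T. (\<delta> / T) * (1 - x (Hs \<sigma> t)) + ?l * (1 - (x (2*t) + x (2*t+1))))"
    unfolding Gs_def sum_pairs
  proof (intro sum.cong refl)
    fix t
    show "pj T \<delta> \<sigma> (2 * t) * ((if heavy \<sigma> (2 * t) then 1 else 0) - x (2 * t)) +
        pj T \<delta> \<sigma> (2 * t + 1) * ((if heavy \<sigma> (2 * t + 1) then 1 else 0) - x (2 * t + 1)) =
        (\<delta> / T) * (1 - x (Hs \<sigma> t)) + ?l * (1 - (x (2*t) + x (2*t+1)))"
      using T by (cases "t \<in> \<sigma>") (auto simp: pj_def heavy_def Hs_def field_simps)
  qed
  also have "\<dots> = (\<delta> / T) * (\<Sum>t<T. 1 - x (Hs \<sigma> t)) + ?l * (\<Sum>t<T. 1 - (x (2*t) + x (2*t+1)))"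
    by (simp add: sum.distrib sum_distrib_left)
  also have "\<dots> = (\<delta> / T) * (\<Sum>t<T. 1 - x (Hs \<sigma> t)) + ?l * (T - (\<Sum>j<2*T. x j))"
    by (simp add: sum_subtractf sum_pairs[of x])
  also have "\<dots> \<ge> (\<delta> / T) * (\<Sum>t<T. 1 - x (Hs \<sigma> t))"
  proof -
    have xc: "x \<in> cube m" "(\<Sum>j<m. x j) \<le> T" using x by (auto simp: alloc_space_def)
    have "(\<Sum>j<2*T. x j) \<le> (\<Sum>j<m. x j)"
      using xc m by (intro sum_mono2) (auto simp: cube_def)
    then have "0 \<le> ?l * (T - (\<Sum>j<2*T. x j))" using xc d by (intro mult_nonneg_nonneg) auto
    then show ?thesis by linarith
  qed
  finally show ?thesis .
qed

lemma prod_two_vals: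
  assumes "finite S" "H \<noteq> L"
  shows "(\<Prod>i\<in>S. (if \<omega> i = H then a else if \<omega> i = L then b else 1)) =
     a ^ card {i\<in>S. \<omega> i = H} * (b::real) ^ card {i\<in>S. \<omega> i = L}"
  using assms
proof (induction S rule: finite_induct)
  case empty then show ?case by simp
next
  case (insert x S)
  have e1: "{i\<in>insert x S. \<omega> i = H} = (if \<omega> x = H then insert x {i\<in>S. \<omega> i = H} else {i\<in>S. \<omega> i = H})" by auto
  have e2: "{i\<in>insert x S. \<omega> i = L} = (if \<omega> x = L then insert x {i\<in>S. \<omega> i = L} else {i\<in>S. \<omega> i = L})" by auto
  have f: "finite {i\<in>S. \<omega> i = H}" "finite {i\<in>S. \<omega> i = L}" "x \<notin> {i\<in>S. \<omega> i = H}" "x \<notin> {i\<in>S. \<omega> i = L}"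
    using insert by auto
  show ?case
  proof (cases "\<omega> x = H")
    case True then show ?thesis using insert f unfolding e1 e2 by (simp add: card_insert_if)
  next
    case F1: False
    show ?thesis
    proof (cases "\<omega> x = L")
      case True then show ?thesis using insert f F1 unfolding e1 e2 by (simp add: card_insert_if)
    next
      case False then show ?thesis using insert f F1 unfolding e1 e2 by (simp add: card_insert_if)
    qed
  qed
qed

lemma sum_two_vals:
  assumes "finite S" "H \<noteq> L"
  shows "(\<Sum>i\<in>S. ((if \<omega> i = H then 1 else 0) - (if \<omega> i = L then 1 else 0))) =
     real (card {i\<in>S. \<omega> i = H}) - real (card {i\<in>S. \<omega> i = L})"
  using assms
proof (induction S rule: finite_induct)
  case empty then show ?case by simp
next
  case (insert x S)
  have e1: "{i\<in>insert x S. \<omega> i = H} = (if \<omega> x = H then insert x {i\<in>S. \<omega> i = H} else {i\<in>S. \<omega> i = H})" by auto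
  have e2: "{i\<in>insert x S. \<omega> i = L} = (if \<omega> x = L then insert x {i\<in>S. \<omega> i = L} else {i\<in>S. \<omega> i = L})" by auto
  have f: "finite {i\<in>S. \<omega> i = H}" "finite {i\<in>S. \<omega> i = L}" "x \<notin> {i\<in>S. \<omega> i = H}" "x \<notin> {i\<in>S. \<omega> i = L}"
    using insert by auto
  show ?case
  proof (cases "\<omega> x = H")
    case True then show ?thesis using insert f unfolding e1 e2 by (simp add: card_insert_if)
  next
    case F1: False
    show ?thesis
    proof (cases "\<omega> x = L")
      case True then show ?thesis using insert f F1 unfolding e1 e2 by (simp add: card_insert_if)
    next
      case False then show ?thesis using insert f F1 unfolding e1 e2 by (simp add: card_insert_if)
    qed
  qed
qed

lemma ratio_bound:
  fixes a :: real and ch cl :: nat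
  assumes d: "0 < \<delta>" "\<delta> \<le> 1/8" and a: "a = (1 - \<delta>) / (1 + \<delta>)"
    and c: "real ch - real cl \<le> 1 / (4*\<delta>)"
  shows "a ^ ch * (1/a) ^ cl \<ge> 1/2"
proof (cases "ch \<le> cl")
  case True
  have ap: "0 < a" "a \<le> 1" using d a by auto
  have "a ^ ch * (1/a) ^ cl = (1/a) ^ (cl - ch)"
    using True ap by (simp add: power_diff field_simps power_one_over)
  also have "\<dots> \<ge> 1" using ap by (simp add: one_le_power)
  finally show ?thesis by simp
next
  case False
  have ap: "0 < a" using d a by auto
  have "a ^ ch * (1/a) ^ cl = a ^ (ch - cl)"
    using False ap by (simp add: power_diff field_simps power_one_over)
  also have "a ^ (ch - cl) \<ge> (1 - 2*\<delta>) ^ (ch - cl)"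
  proof (rule power_mono)
    show "1 - 2*\<delta> \<le> a" using d unfolding a by (simp add: field_simps)
    show "0 \<le> 1 - 2*\<delta>" using d by simp
  qed
  also have "(1 - 2*\<delta>) ^ (ch - cl) \<ge> 1 + real (ch - cl) * (- 2*\<delta>)"
    using Bernoulli_inequality[of "-2*\<delta>" "ch - cl"] d by simp
  also have "real (ch - cl) = real ch - real cl" using False by simp
  finally have "a ^ ch * (1/a) ^ cl \<ge> 1 - 2 * \<delta> * (real ch - real cl)" by (simp add: algebra_simps)
  moreover have "2 * \<delta> * (real ch - real cl) \<le> 1/2"
    using c d by (simp add: field_simps)
  ultimately show ?thesis by linarith
qed



lemma heavy_flip:
  "heavy (flip t \<sigma>) j = (if j = Hs \<sigma> t \<or> j = Ls \<sigma> t then \<not> heavy \<sigma> j else heavy \<sigma> j)"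
proof -
  have "j div 2 = t \<longleftrightarrow> j = 2*t \<or> j = 2*t+1" by auto
  then show ?thesis by (auto simp: heavy_def flip_def Hs_def Ls_def)
qed

lemma pj_flip:
  assumes "0 < \<delta>" "\<delta> < 1"
  shows "pj T \<delta> (flip t \<sigma>) j = pj T \<delta> \<sigma> j *
    (if j = Hs \<sigma> t then (1-\<delta>)/(1+\<delta>) else if j = Ls \<sigma> t then 1/((1-\<delta>)/(1+\<delta>)) else 1)"
  using assms heavy_H[of \<sigma> t] heavy_L[of \<sigma> t] HL_ne[of \<sigma> t]
  by (auto simp: pj_def heavy_flip)

lemma LR_pointwise:
  assumes S: "finite S" and d: "0 < \<delta>" "\<delta> \<le> 1/8"
    and g: "(\<Sum>i\<in>S. Ys \<sigma> t (\<omega> i))\<^sup>2 \<le> 1 / (16*\<delta>\<^sup>2)"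
  shows "(\<Prod>i\<in>S. pj T \<delta> (flip t \<sigma>) (\<omega> i)) \<ge> (1/2) * (\<Prod>i\<in>S. pj T \<delta> \<sigma> (\<omega> i))"
proof -
  define a where "a = (1-\<delta>)/(1+\<delta>)"
  define ch where "ch = card {i\<in>S. \<omega> i = Hs \<sigma> t}"
  define cl where "cl = card {i\<in>S. \<omega> i = Ls \<sigma> t}"
  have "(\<Prod>i\<in>S. pj T \<delta> (flip t \<sigma>) (\<omega> i)) = (\<Prod>i\<in>S. pj T \<delta> \<sigma> (\<omega> i)) *
     (\<Prod>i\<in>S. (if \<omega> i = Hs \<sigma> t then a else if \<omega> i = Ls \<sigma> t then 1/a else 1))"
  proof -
    have "\<delta> < 1" using d by simp
    then show ?thesis unfolding a_def using d by (simp add: pj_flip prod.distrib)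
  qed
  also have "(\<Prod>i\<in>S. (if \<omega> i = Hs \<sigma> t then a else if \<omega> i = Ls \<sigma> t then 1/a else 1)) = a ^ ch * (1/a) ^ cl"
    unfolding ch_def cl_def by (rule prod_two_vals[OF S HL_ne])
  finally have eq: "(\<Prod>i\<in>S. pj T \<delta> (flip t \<sigma>) (\<omega> i)) = (\<Prod>i\<in>S. pj T \<delta> \<sigma> (\<omega> i)) * (a ^ ch * (1/a) ^ cl)" .
  have dd: "(\<Sum>i\<in>S. Ys \<sigma> t (\<omega> i)) = real ch - real cl"
    unfolding Ys_def ch_def cl_def by (rule sum_two_vals[OF S HL_ne])
  have "real ch - real cl \<le> 1 / (4*\<delta>)"
  proof (rule ccontr)
    assume "\<not> ?thesis"
    then have "1/(4*\<delta>) < real ch - real cl" by simp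
    moreover have "0 \<le> 1/(4*\<delta>)" using d by simp
    ultimately have "(1/(4*\<delta>))\<^sup>2 < (real ch - real cl)\<^sup>2" by (intro power_strict_mono) auto
    then show False using g dd by (simp add: power_divide power_mult_distrib)
  qed
  then have r: "a ^ ch * (1/a) ^ cl \<ge> 1/2" using ratio_bound[OF d a_def] by blast
  have "0 \<le> (\<Prod>i\<in>S. pj T \<delta> \<sigma> (\<omega> i))" using d by (intro prod_nonneg pj_nonneg) auto
  then have "(\<Prod>i\<in>S. pj T \<delta> \<sigma> (\<omega> i)) * (1/2) \<le> (\<Prod>i\<in>S. pj T \<delta> \<sigma> (\<omega> i)) * (a ^ ch * (1/a) ^ cl)"
    using r by (intro mult_left_mono) auto
  then show ?thesis unfolding eq by (simp add: mult.commute)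
qed

definition good :: "nat \<Rightarrow> real \<Rightarrow> nat set \<Rightarrow> nat \<Rightarrow> nat set \<Rightarrow> (nat \<Rightarrow> nat) \<Rightarrow> real" where
  "good T \<delta> \<sigma> t S \<omega> = (if (\<Sum>i\<in>S. Ys \<sigma> t (\<omega> i))\<^sup>2 \<le> 1 / (16*\<delta>\<^sup>2) then 1 else 0)"

lemma EE_LR:
  assumes S: "finite S" and d: "0 < \<delta>" "\<delta> \<le> 1/8"
    and phi: "\<And>\<omega>. \<omega> \<in> PiE S (\<lambda>_. J) \<Longrightarrow> \<phi> \<omega> \<ge> 0"
  shows "EE (pj T \<delta> (flip t \<sigma>)) J S \<phi> \<ge> (1/2) * EE (pj T \<delta> \<sigma>) J S (\<lambda>\<omega>. good T \<delta> \<sigma> t S \<omega> * \<phi> \<omega>)"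
  unfolding EE_def sum_distrib_left
proof (intro sum_mono)
  fix \<omega> assume w: "\<omega> \<in> PiE S (\<lambda>_. J)"
  have P0: "0 \<le> (\<Prod>i\<in>S. pj T \<delta> \<sigma> (\<omega> i))" using d by (intro prod_nonneg pj_nonneg) auto
  have P1: "0 \<le> (\<Prod>i\<in>S. pj T \<delta> (flip t \<sigma>) (\<omega> i))" using d by (intro prod_nonneg pj_nonneg) auto
  show "1/2 * ((\<Prod>i\<in>S. pj T \<delta> \<sigma> (\<omega> i)) * (good T \<delta> \<sigma> t S \<omega> * \<phi> \<omega>))
        \<le> (\<Prod>i\<in>S. pj T \<delta> (flip t \<sigma>) (\<omega> i)) * \<phi> \<omega>"
  proof (cases "(\<Sum>i\<in>S. Ys \<sigma> t (\<omega> i))\<^sup>2 \<le> 1 / (16*\<delta>\<^sup>2)")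
    case True
    have "1/2 * (\<Prod>i\<in>S. pj T \<delta> \<sigma> (\<omega> i)) * \<phi> \<omega> \<le> (\<Prod>i\<in>S. pj T \<delta> (flip t \<sigma>) (\<omega> i)) * \<phi> \<omega>"
      using LR_pointwise[OF S d True] phi[OF w] by (intro mult_right_mono) auto
    then show ?thesis using True by (simp add: good_def mult_ac)
  next
    case False
    then show ?thesis using P1 phi[OF w] by (simp add: good_def)
  qed
qed

lemma sum_diag:
  assumes "finite S"
  shows "(\<Sum>i\<in>S. \<Sum>i'\<in>S. (if i = i' then v else w)) = real (card S) * v + real (card S) * (real (card S) - 1) * (w::real)"
proof -
  have "(\<Sum>i'\<in>S. (if i = i' then v else w)) = v + (real (card S) - 1) * w" if "i \<in> S" for i
  proof -
    have "(\<Sum>i'\<in>S. (if i = i' then v else w)) = (if i = i then v else w) + (\<Sum>i'\<in>S-{i}. (if i = i' then v else w))"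
      using that assms by (simp add: sum.remove)
    also have "(\<Sum>i'\<in>S-{i}. (if i = i' then v else w)) = (\<Sum>i'\<in>S-{i}. w)" by (intro sum.cong) auto
    also have "\<dots> = (real (card S) - 1) * w"
    proof -
      have "card S \<ge> 1" using that assms by (metis One_nat_def Suc_leI card_gt_0_iff empty_iff)
      then show ?thesis using that assms by (simp add: of_nat_diff)
    qed
    finally show ?thesis by simp
  qed
  then have "(\<Sum>i\<in>S. \<Sum>i'\<in>S. (if i = i' then v else w)) = (\<Sum>i\<in>S. v + (real (card S) - 1) * w)"
    by (intro sum.cong) auto
  then show ?thesis by (simp add: algebra_simps)
qed

lemma moment2:
  assumes T: "T \<ge> 1" "t < T" and S: "finite S" and d: "0 < \<delta>" "\<delta> \<le> 1/8"
  shows "EE (pj T \<delta> \<sigma>) {..<2*T} S (\<lambda>\<omega>. (\<Sum>i\<in>S. Ys \<sigma> t (\<omega> i))\<^sup>2)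
     \<le> real (card S) / T + (real (card S))\<^sup>2 * \<delta>\<^sup>2 / (real T)\<^sup>2"
proof -
  let ?p = "pj T \<delta> \<sigma>" and ?J = "{..<2*T}" and ?Y = "Ys \<sigma> t"
  have ps: "sum ?p ?J = 1" using pj_sum T by blast
  have HJ: "Hs \<sigma> t \<in> ?J" "Ls \<sigma> t \<in> ?J" using HL_lt T by auto
  have pH: "?p (Hs \<sigma> t) = (1+\<delta>)/(2*T)" using heavy_H by (simp add: pj_def)
  have pL: "?p (Ls \<sigma> t) = (1-\<delta>)/(2*T)" using heavy_L by (simp add: pj_def)
  have m1: "(\<Sum>j\<in>?J. ?p j * ?Y j) = \<delta> / T"
  proof -
    have "(\<Sum>j\<in>?J. ?p j * ?Y j) = (\<Sum>j\<in>?J. (if j = Hs \<sigma> t then ?p j else 0)) - (\<Sum>j\<in>?J. (if j = Ls \<sigma> t then ?p j else 0))"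
    proof -
      have "?p j * ?Y j = (if j = Hs \<sigma> t then ?p j else 0) - (if j = Ls \<sigma> t then ?p j else 0)" for j
        by (simp add: Ys_def right_diff_distrib)
      then show ?thesis by (simp add: sum_subtractf)
    qed
    also have "\<dots> = ?p (Hs \<sigma> t) - ?p (Ls \<sigma> t)" using HJ by (simp add: sum.delta')
    finally show ?thesis using pH pL T by (simp add: field_simps)
  qed
  have m2: "(\<Sum>j\<in>?J. ?p j * (?Y j * ?Y j)) = 1 / T"
  proof -
    have "?p j * (?Y j * ?Y j) = (if j = Hs \<sigma> t then ?p j else 0) + (if j = Ls \<sigma> t then ?p j else 0)" for j
      using HL_ne[of \<sigma> t] by (auto simp: Ys_def)
    then have "(\<Sum>j\<in>?J. ?p j * (?Y j * ?Y j)) = (\<Sum>j\<in>?J. (if j = Hs \<sigma> t then ?p j else 0)) + (\<Sum>j\<in>?J. (if j = Ls \<sigma> t then ?p j else 0))"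
      by (simp add: sum.distrib)
    also have "\<dots> = ?p (Hs \<sigma> t) + ?p (Ls \<sigma> t)" using HJ by (simp add: sum.delta')
    finally show ?thesis using pH pL T by (simp add: field_simps)
  qed
  have "EE ?p ?J S (\<lambda>\<omega>. (\<Sum>i\<in>S. ?Y (\<omega> i))\<^sup>2) = EE ?p ?J S (\<lambda>\<omega>. \<Sum>i\<in>S. \<Sum>i'\<in>S. ?Y (\<omega> i) * ?Y (\<omega> i'))"
    by (simp add: power2_eq_square sum_product)
  also have "\<dots> = (\<Sum>i\<in>S. \<Sum>i'\<in>S. EE ?p ?J S (\<lambda>\<omega>. ?Y (\<omega> i) * ?Y (\<omega> i')))"
    by (simp add: EE_sum)
  also have "\<dots> = (\<Sum>i\<in>S. \<Sum>i'\<in>S. (if i = i' then 1/T else (\<delta>/T) * (\<delta>/T)))"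
  proof (intro sum.cong refl)
    fix i i' assume ii: "i \<in> S" "i' \<in> S"
    show "EE ?p ?J S (\<lambda>\<omega>. ?Y (\<omega> i) * ?Y (\<omega> i')) = (if i = i' then 1/T else (\<delta>/T) * (\<delta>/T))"
    proof (cases "i = i'")
      case True
      then show ?thesis using EE_marg1[OF S ii(1) _ ps, of "\<lambda>j. ?Y j * ?Y j"] m2 by simp
    next
      case False
      then show ?thesis using EE_marg2[OF S ii False _ ps, of ?Y ?Y] m1 by simp
    qed
  qed
  also have "\<dots> = real (card S) * (1/T) + real (card S) * (real (card S) - 1) * ((\<delta>/T) * (\<delta>/T))"
    by (rule sum_diag[OF S])
  also have "\<dots> \<le> real (card S) / T + (real (card S))\<^sup>2 * \<delta>\<^sup>2 / (real T)\<^sup>2"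
  proof -
    have "real (card S) * (real (card S) - 1) * ((\<delta>/T) * (\<delta>/T)) \<le> (real (card S))\<^sup>2 * \<delta>\<^sup>2 / (real T)\<^sup>2"
    proof -
      have "real (card S) * (real (card S) - 1) * ((\<delta>/T) * (\<delta>/T)) \<le> real (card S) * real (card S) * ((\<delta>/T) * (\<delta>/T))"
        by (intro mult_right_mono mult_left_mono) auto
      then show ?thesis by (simp add: power2_eq_square)
    qed
    then show ?thesis by simp
  qed
  finally show ?thesis .
qed



lemma flip_flip: "flip t (flip t \<sigma>) = \<sigma>"
  by (auto simp: flip_def)

lemma flip_Pow: "t < T \<Longrightarrow> \<sigma> \<in> Pow {..<T} \<Longrightarrow> flip t \<sigma> \<in> Pow {..<T}"
  by (auto simp: flip_def)

lemma sum_flip: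
  assumes "t < T"
  shows "(\<Sum>\<sigma>\<in>Pow {..<T}. f (flip t \<sigma>)) = (\<Sum>\<sigma>\<in>Pow {..<T}. f \<sigma>)"
  by (rule sum.reindex_bij_witness[where i="flip t" and j="flip t"])
     (use assms in \<open>auto simp: flip_flip flip_def\<close>)

lemma Hs_flip: "Hs (flip t \<sigma>) t = Ls \<sigma> t"
  by (auto simp: Hs_def Ls_def flip_def)

lemma HL_pair: "(1 - x (Hs \<sigma> t)) + (1 - x (Ls \<sigma> t)) = (1 - x (2*t)) + (1 - (x (2*t+1)::real))"
  by (auto simp: Hs_def Ls_def)

lemma good_01: "good T \<delta> \<sigma> t S \<omega> = 0 \<or> good T \<delta> \<sigma> t S \<omega> = 1"
  by (simp add: good_def)

lemma bad_bound:
  assumes "0 < \<delta>"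
  shows "1 - good T \<delta> \<sigma> t S \<omega> \<le> 16 * \<delta>\<^sup>2 * (\<Sum>i\<in>S. Ys \<sigma> t (\<omega> i))\<^sup>2"
proof (cases "(\<Sum>i\<in>S. Ys \<sigma> t (\<omega> i))\<^sup>2 \<le> 1 / (16*\<delta>\<^sup>2)")
  case True then show ?thesis by (simp add: good_def)
next
  case False
  then have "1 / (16*\<delta>\<^sup>2) < (\<Sum>i\<in>S. Ys \<sigma> t (\<omega> i))\<^sup>2" by simp
  then have "1 < 16 * \<delta>\<^sup>2 * (\<Sum>i\<in>S. Ys \<sigma> t (\<omega> i))\<^sup>2" using assms by (simp add: field_simps)
  then show ?thesis using False by (simp add: good_def)
qed

lemma core:
  fixes F :: "(nat \<Rightarrow> nat) \<Rightarrow> alloc"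
  assumes T: "T \<ge> 1" and m: "2*T \<le> m" and d: "0 < \<delta>" "\<delta> \<le> 1/8" and S: "finite S" "card S = k"
    and F: "\<And>\<omega>. F \<omega> \<in> alloc_space m (real T)"
    and q: "real k * \<delta>\<^sup>2 / T \<le> 1/256"
  shows "(\<Sum>\<sigma>\<in>Pow {..<T}. EE (pj T \<delta> \<sigma>) {..<2*T} S (\<lambda>\<omega>. Gs T \<delta> \<sigma> (F \<omega>))) \<ge> 2^T * (3*\<delta>/16)"
proof -
  define J where "J = {..<2*T}"
  define E where "E = (\<lambda>\<sigma> h. EE (pj T \<delta> \<sigma>) J S h)"
  define u where "u = (\<lambda>t \<omega>. (1 - F \<omega> (2*t)) + (1 - F \<omega> (2*t+1)))"
  have pnn: "\<And>\<sigma> j. 0 \<le> pj T \<delta> \<sigma> j" using d by (intro pj_nonneg) auto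
  have Emono: "E \<sigma> f \<le> E \<sigma> g" if "\<And>\<omega>. f \<omega> \<le> g \<omega>" for \<sigma> f g
    unfolding E_def by (rule EE_mono) (use pnn that in auto)
  have Fc: "0 \<le> F \<omega> j \<and> F \<omega> j \<le> 1" if "j < m" for \<omega> j
    using F[of \<omega>] that by (auto simp: alloc_space_def cube_def)
  have FT: "(\<Sum>j<m. F \<omega> j) \<le> T" for \<omega> using F[of \<omega>] by (auto simp: alloc_space_def)
  have JT: "finite J" "sum (pj T \<delta> \<sigma>) J = 1" for \<sigma> unfolding J_def using pj_sum T by auto
  have Econst: "E \<sigma> (\<lambda>_. c) = c" for \<sigma> c unfolding E_def using EE_const S JT by blast
  have a: "E \<sigma> (\<lambda>\<omega>. Gs T \<delta> \<sigma> (F \<omega>)) \<ge> (\<delta>/T) * (\<Sum>t<T. E \<sigma> (\<lambda>\<omega>. 1 - F \<omega> (Hs \<sigma> t)))" for \<sigma>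
  proof -
    have "E \<sigma> (\<lambda>\<omega>. Gs T \<delta> \<sigma> (F \<omega>)) \<ge> E \<sigma> (\<lambda>\<omega>. (\<delta>/T) * (\<Sum>t<T. 1 - F \<omega> (Hs \<sigma> t)))"
      by (intro Emono G_lower[OF F m T d(1)]) (use d in auto)
    then show ?thesis unfolding E_def by (simp only: EE_scale EE_sum)
  qed
  have b: "(\<Sum>\<sigma>\<in>Pow {..<T}. E \<sigma> (\<lambda>\<omega>. 1 - F \<omega> (Hs \<sigma> t))) \<ge>
      (1/4) * (\<Sum>\<sigma>\<in>Pow {..<T}. E \<sigma> (\<lambda>\<omega>. good T \<delta> \<sigma> t S \<omega> * u t \<omega>))" if t: "t < T" for t
  proof -
    have tm: "2*t+1 < m" using t m by auto
    have Hm: "Hs \<sigma> t < m" "Ls \<sigma> t < m" for \<sigma> using HL_lt[OF t, of \<sigma>] m by linarith+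
    have X0: "0 \<le> 1 - F \<omega> (Hs \<sigma> t)" "0 \<le> 1 - F \<omega> (Ls \<sigma> t)" for \<omega> \<sigma> using Fc Hm by auto
    have "(\<Sum>\<sigma>\<in>Pow {..<T}. E \<sigma> (\<lambda>\<omega>. 1 - F \<omega> (Hs \<sigma> t))) =
          (\<Sum>\<sigma>\<in>Pow {..<T}. E (flip t \<sigma>) (\<lambda>\<omega>. 1 - F \<omega> (Hs (flip t \<sigma>) t)))"
      using sum_flip[OF t, of "\<lambda>\<sigma>. E \<sigma> (\<lambda>\<omega>. 1 - F \<omega> (Hs \<sigma> t))"] by simp
    also have "\<dots> = (\<Sum>\<sigma>\<in>Pow {..<T}. E (flip t \<sigma>) (\<lambda>\<omega>. 1 - F \<omega> (Ls \<sigma> t)))"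
      by (simp add: Hs_flip)
    finally have eq: "(\<Sum>\<sigma>\<in>Pow {..<T}. E \<sigma> (\<lambda>\<omega>. 1 - F \<omega> (Hs \<sigma> t))) =
          (\<Sum>\<sigma>\<in>Pow {..<T}. E (flip t \<sigma>) (\<lambda>\<omega>. 1 - F \<omega> (Ls \<sigma> t)))" .
    have "2 * (\<Sum>\<sigma>\<in>Pow {..<T}. E \<sigma> (\<lambda>\<omega>. 1 - F \<omega> (Hs \<sigma> t))) =
          (\<Sum>\<sigma>\<in>Pow {..<T}. E \<sigma> (\<lambda>\<omega>. 1 - F \<omega> (Hs \<sigma> t)) + E (flip t \<sigma>) (\<lambda>\<omega>. 1 - F \<omega> (Ls \<sigma> t)))"
      using eq by (simp add: sum.distrib)
    also have "\<dots> \<ge> (\<Sum>\<sigma>\<in>Pow {..<T}. (1/2) * E \<sigma> (\<lambda>\<omega>. good T \<delta> \<sigma> t S \<omega> * u t \<omega>))"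
    proof (intro sum_mono)
      fix \<sigma>
      have 1: "E \<sigma> (\<lambda>\<omega>. 1 - F \<omega> (Hs \<sigma> t)) \<ge> (1/2) * E \<sigma> (\<lambda>\<omega>. good T \<delta> \<sigma> t S \<omega> * (1 - F \<omega> (Hs \<sigma> t)))"
      proof -
        have "E \<sigma> (\<lambda>\<omega>. 1 - F \<omega> (Hs \<sigma> t)) \<ge> E \<sigma> (\<lambda>\<omega>. (1/2) * (good T \<delta> \<sigma> t S \<omega> * (1 - F \<omega> (Hs \<sigma> t))))"
        proof (intro Emono)
          fix \<omega> show "1 / 2 * (good T \<delta> \<sigma> t S \<omega> * (1 - F \<omega> (Hs \<sigma> t))) \<le> 1 - F \<omega> (Hs \<sigma> t)"
            using good_01[of T \<delta> \<sigma> t S \<omega>] X0[of \<omega> \<sigma>] by auto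
        qed
        then show ?thesis unfolding E_def by (simp only: EE_scale)
      qed
      have 2: "E (flip t \<sigma>) (\<lambda>\<omega>. 1 - F \<omega> (Ls \<sigma> t)) \<ge> (1/2) * E \<sigma> (\<lambda>\<omega>. good T \<delta> \<sigma> t S \<omega> * (1 - F \<omega> (Ls \<sigma> t)))"
        unfolding E_def by (rule EE_LR[OF S(1) d]) (use X0 in auto)
      have "E \<sigma> (\<lambda>\<omega>. good T \<delta> \<sigma> t S \<omega> * u t \<omega>) =
            E \<sigma> (\<lambda>\<omega>. good T \<delta> \<sigma> t S \<omega> * (1 - F \<omega> (Hs \<sigma> t))) + E \<sigma> (\<lambda>\<omega>. good T \<delta> \<sigma> t S \<omega> * (1 - F \<omega> (Ls \<sigma> t)))"
      proof -
        have "(\<lambda>\<omega>. good T \<delta> \<sigma> t S \<omega> * u t \<omega>) = (\<lambda>\<omega>. good T \<delta> \<sigma> t S \<omega> * (1 - F \<omega> (Hs \<sigma> t)) + good T \<delta> \<sigma> t S \<omega> * (1 - F \<omega> (Ls \<sigma> t)))"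
        proof (rule ext)
          fix \<omega>
          have "u t \<omega> = (1 - F \<omega> (Hs \<sigma> t)) + (1 - F \<omega> (Ls \<sigma> t))"
            unfolding u_def by (rule HL_pair[symmetric])
          then show "good T \<delta> \<sigma> t S \<omega> * u t \<omega> = good T \<delta> \<sigma> t S \<omega> * (1 - F \<omega> (Hs \<sigma> t)) + good T \<delta> \<sigma> t S \<omega> * (1 - F \<omega> (Ls \<sigma> t))"
            by (simp only: distrib_left)
        qed
        then show ?thesis unfolding E_def by (simp only: EE_add)
      qed
      then show "(1/2) * E \<sigma> (\<lambda>\<omega>. good T \<delta> \<sigma> t S \<omega> * u t \<omega>) \<le>
          E \<sigma> (\<lambda>\<omega>. 1 - F \<omega> (Hs \<sigma> t)) + E (flip t \<sigma>) (\<lambda>\<omega>. 1 - F \<omega> (Ls \<sigma> t))"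
        using 1 2 by simp
    qed
    finally have "(\<Sum>\<sigma>\<in>Pow {..<T}. (1/2) * E \<sigma> (\<lambda>\<omega>. good T \<delta> \<sigma> t S \<omega> * u t \<omega>)) \<le> 2 * (\<Sum>\<sigma>\<in>Pow {..<T}. E \<sigma> (\<lambda>\<omega>. 1 - F \<omega> (Hs \<sigma> t)))" .
    then show ?thesis by (simp only: sum_distrib_left[symmetric])
  qed
  have dd: "E \<sigma> (\<lambda>\<omega>. \<Sum>t<T. good T \<delta> \<sigma> t S \<omega> * u t \<omega>) \<ge> 3 * real T / 4" for \<sigma>
  proof -
    define D where "D = (\<lambda>t \<omega>. (\<Sum>i\<in>S. Ys \<sigma> t (\<omega> i))\<^sup>2)"
    have pw: "(\<Sum>t<T. good T \<delta> \<sigma> t S \<omega> * u t \<omega>) \<ge> T - 32 * \<delta>\<^sup>2 * (\<Sum>t<T. D t \<omega>)" for \<omega>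
    proof -
      have u02: "0 \<le> u t \<omega> \<and> u t \<omega> \<le> 2" if "t < T" for t
        using Fc[of "2*t" \<omega>] Fc[of "2*t+1" \<omega>] that m by (auto simp: u_def)
      have "(\<Sum>t<T. u t \<omega>) = 2*T - (\<Sum>j<2*T. F \<omega> j)"
        unfolding u_def by (simp add: sum_pairs[of "F \<omega>"] sum.distrib sum_subtractf sum_negf)
      moreover have "(\<Sum>j<2*T. F \<omega> j) \<le> (\<Sum>j<m. F \<omega> j)"
        using m Fc by (intro sum_mono2) auto
      ultimately have uT: "(\<Sum>t<T. u t \<omega>) \<ge> T" using FT[of \<omega>] by simp
      have "(\<Sum>t<T. good T \<delta> \<sigma> t S \<omega> * u t \<omega>) \<ge> (\<Sum>t<T. u t \<omega> - 2 * (16 * \<delta>\<^sup>2 * D t \<omega>))"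
      proof (intro sum_mono)
        fix t assume "t \<in> {..<T}"
        then have "0 \<le> u t \<omega> \<and> u t \<omega> \<le> 2" using u02 by auto
        moreover have "1 - good T \<delta> \<sigma> t S \<omega> \<le> 16 * \<delta>\<^sup>2 * D t \<omega>" unfolding D_def by (rule bad_bound[OF d(1)])
        moreover note good_01[of T \<delta> \<sigma> t S \<omega>]
        ultimately show "u t \<omega> - 2 * (16 * \<delta>\<^sup>2 * D t \<omega>) \<le> good T \<delta> \<sigma> t S \<omega> * u t \<omega>" by auto
      qed
      also have "(\<Sum>t<T. u t \<omega> - 2 * (16 * \<delta>\<^sup>2 * D t \<omega>)) = (\<Sum>t<T. u t \<omega>) - 32 * \<delta>\<^sup>2 * (\<Sum>t<T. D t \<omega>)"
        by (simp add: sum_subtractf sum_distrib_left mult.assoc)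
      finally show ?thesis using uT by simp
    qed
    have mom: "E \<sigma> (D t) \<le> real k / T + (real k)\<^sup>2 * \<delta>\<^sup>2 / (real T)\<^sup>2" if "t < T" for t
      unfolding E_def D_def J_def using moment2[OF T that S(1) d, of \<sigma>] S(2) by simp
    have f1: "E \<sigma> (\<lambda>\<omega>. \<Sum>t<T. good T \<delta> \<sigma> t S \<omega> * u t \<omega>) \<ge> E \<sigma> (\<lambda>\<omega>. T - 32 * \<delta>\<^sup>2 * (\<Sum>t<T. D t \<omega>))"
      by (intro Emono pw)
    have f2: "E \<sigma> (\<lambda>\<omega>. T - 32 * \<delta>\<^sup>2 * (\<Sum>t<T. D t \<omega>)) = T - 32 * \<delta>\<^sup>2 * (\<Sum>t<T. E \<sigma> (D t))"
      unfolding E_def by (simp add: EE_diff EE_scale EE_sum Econst[unfolded E_def])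
    have f3: "(\<Sum>t<T. E \<sigma> (D t)) \<le> (\<Sum>t<T. real k / T + (real k)\<^sup>2 * \<delta>\<^sup>2 / (real T)\<^sup>2)"
      by (intro sum_mono mom) auto
    have f4: "32 * \<delta>\<^sup>2 * (\<Sum>t<T. E \<sigma> (D t)) \<le> 32 * \<delta>\<^sup>2 * (T * (real k / T + (real k)\<^sup>2 * \<delta>\<^sup>2 / (real T)\<^sup>2))"
      using f3 by (intro mult_left_mono) auto
    have "E \<sigma> (\<lambda>\<omega>. \<Sum>t<T. good T \<delta> \<sigma> t S \<omega> * u t \<omega>) \<ge>
        T - 32 * \<delta>\<^sup>2 * (T * (real k / T + (real k)\<^sup>2 * \<delta>\<^sup>2 / (real T)\<^sup>2))"
      using f1 f2 f4 by linarith
    moreover have "32 * \<delta>\<^sup>2 * (T * (real k / T + (real k)\<^sup>2 * \<delta>\<^sup>2 / (real T)\<^sup>2)) \<le> T / 4"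
    proof -
      define qq where "qq = real k * \<delta>\<^sup>2 / T"
      have q0: "0 \<le> qq" "qq \<le> 1/256" using q by (auto simp: qq_def)
      have "32 * \<delta>\<^sup>2 * (T * (real k / T + (real k)\<^sup>2 * \<delta>\<^sup>2 / (real T)\<^sup>2)) = 32 * T * (qq + qq\<^sup>2)"
        using T by (simp add: qq_def field_simps power2_eq_square)
      also have "\<dots> \<le> 32 * T * (1/256 + (1/256)\<^sup>2)"
        using q0 by (intro mult_left_mono add_mono power_mono) auto
      also have "\<dots> \<le> T / 4" by (simp add: power2_eq_square)
      finally show ?thesis .
    qed
    ultimately show ?thesis by simp
  qed
  let ?P = "Pow {..<T}"
  have e1: "(\<Sum>\<sigma>\<in>?P. E \<sigma> (\<lambda>\<omega>. Gs T \<delta> \<sigma> (F \<omega>))) \<ge>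
        (\<Sum>\<sigma>\<in>?P. (\<delta>/T) * (\<Sum>t<T. E \<sigma> (\<lambda>\<omega>. 1 - F \<omega> (Hs \<sigma> t))))"
    by (intro sum_mono a)
  have e2: "(\<Sum>\<sigma>\<in>?P. (\<delta>/T) * (\<Sum>t<T. E \<sigma> (\<lambda>\<omega>. 1 - F \<omega> (Hs \<sigma> t)))) =
       (\<delta>/T) * (\<Sum>t<T. \<Sum>\<sigma>\<in>?P. E \<sigma> (\<lambda>\<omega>. 1 - F \<omega> (Hs \<sigma> t)))"
    by (simp add: sum_distrib_left sum.swap[of _ "Pow {..<T}"])
  have e3: "(\<Sum>t<T. \<Sum>\<sigma>\<in>?P. E \<sigma> (\<lambda>\<omega>. 1 - F \<omega> (Hs \<sigma> t))) \<ge>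
      (\<Sum>t<T. (1/4) * (\<Sum>\<sigma>\<in>?P. E \<sigma> (\<lambda>\<omega>. good T \<delta> \<sigma> t S \<omega> * u t \<omega>)))"
    by (intro sum_mono b) auto
  have e4: "(\<Sum>t<T. (1/4) * (\<Sum>\<sigma>\<in>?P. E \<sigma> (\<lambda>\<omega>. good T \<delta> \<sigma> t S \<omega> * u t \<omega>))) =
      (1/4) * (\<Sum>\<sigma>\<in>?P. E \<sigma> (\<lambda>\<omega>. \<Sum>t<T. good T \<delta> \<sigma> t S \<omega> * u t \<omega>))"
    unfolding E_def by (simp add: sum_distrib_left EE_sum sum.swap[of _ "Pow {..<T}"])
  have e5: "(\<Sum>\<sigma>\<in>?P. E \<sigma> (\<lambda>\<omega>. \<Sum>t<T. good T \<delta> \<sigma> t S \<omega> * u t \<omega>)) \<ge> (\<Sum>\<sigma>\<in>?P. 3 * real T / 4)"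
    by (intro sum_mono dd)
  have e6: "(\<Sum>\<sigma>\<in>?P. 3 * real T / 4) = 2^T * (3 * real T / 4)"
    by (simp add: card_Pow)
  have "(\<Sum>t<T. \<Sum>\<sigma>\<in>?P. E \<sigma> (\<lambda>\<omega>. 1 - F \<omega> (Hs \<sigma> t))) \<ge> (1/4) * (2^T * (3 * real T / 4))"
    using e3 e4 e5 e6 by linarith
  then have "(\<delta>/T) * (\<Sum>t<T. \<Sum>\<sigma>\<in>?P. E \<sigma> (\<lambda>\<omega>. 1 - F \<omega> (Hs \<sigma> t))) \<ge> (\<delta>/T) * ((1/4) * (2^T * (3 * real T / 4)))"
    using d by (intro mult_left_mono) auto
  then have "(\<Sum>\<sigma>\<in>?P. E \<sigma> (\<lambda>\<omega>. Gs T \<delta> \<sigma> (F \<omega>))) \<ge> (\<delta>/T) * ((1/4) * (2^T * (3 * real T / 4)))"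
    using e1 e2 by linarith
  then show ?thesis using T unfolding E_def J_def by (simp add: field_simps)
qed



definition costj :: "nat \<Rightarrow> costfn" where
  "costj j = (\<lambda>x. 1 - x j)"

lemma cube_le1: "x \<in> cube m \<Longrightarrow> 0 \<le> x j \<and> x j \<le> 1"
  by (cases "j < m") (auto simp: cube_def)

lemma costj_lip: "costj j \<in> lip_class m"
proof -
  have "\<bar>x j - y j\<bar> \<le> (\<Sum>i<m. \<bar>x i - y i\<bar>)" if "x \<in> cube m" "y \<in> cube m" for x y :: alloc
  proof (cases "j < m")
    case True then show ?thesis by (intro member_le_sum) auto
  next
    case False then show ?thesis using that by (simp add: cube_def sum_nonneg)
  qed
  then show ?thesis unfolding lip_class_def costj_def using cube_le1
    by (auto simp: abs_minus_commute)
qed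

lemma costj_pb: "pb_cost m (costj j)"
  unfolding pb_cost_def using costj_lip
  by (cases "j < m") (auto simp: costj_def cube_def)

definition xstar :: "nat \<Rightarrow> nat set \<Rightarrow> alloc" where
  "xstar T \<sigma> = (\<lambda>j. if j < 2*T \<and> heavy \<sigma> j then 1 else 0)"

lemma xstar_alloc:
  assumes "2*T \<le> m"
  shows "xstar T \<sigma> \<in> alloc_space m (real T)"
proof -
  have "(\<Sum>j<m. xstar T \<sigma> j) = (\<Sum>j<2*T. xstar T \<sigma> j)"
    using assms by (intro sum.mono_neutral_right) (auto simp: xstar_def)
  also have "\<dots> = (\<Sum>t<T. 1)"
    unfolding sum_pairs by (intro sum.cong refl) (auto simp: xstar_def heavy_def)
  finally show ?thesis using assms by (auto simp: alloc_space_def cube_def xstar_def)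
qed

lemma social_cost_nonneg:
  "x \<in> cube m \<Longrightarrow> 0 \<le> social_cost n (\<lambda>i. costj (\<tau> i)) x"
  unfolding social_cost_def costj_def using cube_le1
  by (intro divide_nonneg_nonneg sum_nonneg) auto

lemma per_instance:
  assumes m: "2*T \<le> m"
    and hyp: "expected_panel_cost k xt n (\<lambda>i. costj (\<tau> i)) \<le> social_opt m (real T) n (\<lambda>i. costj (\<tau> i)) + \<epsilon>"
    and n: "n \<ge> 1" "panels k n \<noteq> {}"
  shows "(\<Sum>S\<in>panels k n. \<Sum>i<n. xstar T \<sigma> (\<tau> i) - xt (map (\<lambda>i. costj (\<tau> i)) (sorted_list_of_set S)) (\<tau> i))
     \<le> \<epsilon> * n * card (panels k n)"
proof -
  let ?C = "\<lambda>i. costj (\<tau> i)"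
  let ?P = "panels k n"
  have fin: "finite ?P" unfolding panels_def by (rule finite_subset[of _ "Pow {..<n}"]) auto
  have C0: "card ?P > 0" using fin n by (simp add: card_gt_0_iff)
  have "social_opt m (real T) n ?C \<le> social_cost n ?C (xstar T \<sigma>)"
    unfolding social_opt_def
  proof (rule cINF_lower)
    show "bdd_below (social_cost n ?C ` alloc_space m (real T))"
      by (rule bdd_belowI[of _ 0]) (auto simp: alloc_space_def intro: social_cost_nonneg)
    show "xstar T \<sigma> \<in> alloc_space m (real T)" by (rule xstar_alloc[OF m])
  qed
  then have "(\<Sum>S\<in>?P. social_cost n ?C (panel_decision xt ?C S)) / card ?P \<le> social_cost n ?C (xstar T \<sigma>) + \<epsilon>"
    using hyp unfolding expected_panel_cost_def by linarith
  then have "(\<Sum>S\<in>?P. social_cost n ?C (panel_decision xt ?C S)) \<le> card ?P * (social_cost n ?C (xstar T \<sigma>) + \<epsilon>)"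
    using C0 by (simp add: divide_le_eq mult.commute)
  then have "(\<Sum>S\<in>?P. social_cost n ?C (panel_decision xt ?C S) - social_cost n ?C (xstar T \<sigma>)) \<le> card ?P * \<epsilon>"
    by (simp add: sum_subtractf algebra_simps)
  moreover have "social_cost n ?C (panel_decision xt ?C S) - social_cost n ?C (xstar T \<sigma>) =
     (\<Sum>i<n. xstar T \<sigma> (\<tau> i) - xt (map (\<lambda>i. costj (\<tau> i)) (sorted_list_of_set S)) (\<tau> i)) / n" for S
    unfolding social_cost_def panel_decision_def costj_def
    by (simp add: diff_divide_distrib[symmetric] sum_subtractf[symmetric])
  ultimately have "(\<Sum>S\<in>?P. (\<Sum>i<n. xstar T \<sigma> (\<tau> i) - xt (map (\<lambda>i. costj (\<tau> i)) (sorted_list_of_set S)) (\<tau> i)) / n) \<le> card ?P * \<epsilon>"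
    by simp
  then show ?thesis using n by (simp add: sum_divide_distrib[symmetric] divide_le_eq mult_ac)
qed



lemma indep_step:
  fixes XX :: "(nat \<Rightarrow> nat) \<Rightarrow> alloc"
  assumes S: "S \<subseteq> {..<n}" and i: "i < n" "i \<notin> S" and J: "finite J" "sum p J = 1"
    and inv: "\<And>\<tau> i' j. i' \<notin> S \<Longrightarrow> XX (\<tau>(i':=j)) = XX \<tau>"
  shows "EE p J {..<n} (\<lambda>\<tau>. h (\<tau> i) (XX \<tau>)) = EE p J S (\<lambda>\<omega>. \<Sum>j\<in>J. p j * h j (XX \<omega>))"
proof -
  define A' where "A' = {..<n} - {i}"
  have A: "{..<n} = insert i A'" "finite A'" "i \<notin> A'" using i by (auto simp: A'_def)
  have A2: "A' = S \<union> (A' - S)" "S \<inter> (A' - S) = {}" "finite S" "finite (A' - S)"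
    using S i A(2) by (auto simp: A'_def intro: finite_subset)
  have "EE p J {..<n} (\<lambda>\<tau>. h (\<tau> i) (XX \<tau>)) = (\<Sum>j\<in>J. p j * EE p J A' (\<lambda>\<rho>. h ((\<rho>(i:=j)) i) (XX (\<rho>(i:=j)))))"
    unfolding A(1) by (rule EE_insert[OF A(2,3)])
  also have "\<dots> = (\<Sum>j\<in>J. p j * EE p J A' (\<lambda>\<rho>. h j (XX \<rho>)))"
    using inv i by simp
  also have "\<dots> = (\<Sum>j\<in>J. p j * EE p J S (\<lambda>\<rho>. h j (XX \<rho>)))"
  proof (intro sum.cong refl arg_cong[where f="\<lambda>z. p _ * z"])
    fix j
    have "EE p J (S \<union> (A' - S)) (\<lambda>\<rho>. h j (XX \<rho>)) = EE p J S (\<lambda>\<rho>. h j (XX \<rho>))"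
      by (rule EE_restrict[OF A2(4) A2(2) A2(3) J]) (use inv in auto)
    then show "EE p J A' (\<lambda>\<rho>. h j (XX \<rho>)) = EE p J S (\<lambda>\<rho>. h j (XX \<rho>))" using A2(1) by simp
  qed
  also have "\<dots> = EE p J S (\<lambda>\<omega>. \<Sum>j\<in>J. p j * h j (XX \<omega>))"
    by (simp add: EE_sum EE_scale)
  finally show ?thesis .
qed

lemma X_inv:
  assumes "finite S" "i' \<notin> S"
  shows "xt (map (\<lambda>i. costj ((\<tau>(i':=j)) i)) (sorted_list_of_set S)) = xt (map (\<lambda>i. costj (\<tau> i)) (sorted_list_of_set S))"
proof -
  have "map (\<lambda>i. costj ((\<tau>(i':=j)) i)) (sorted_list_of_set S) = map (\<lambda>i. costj (\<tau> i)) (sorted_list_of_set S)"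
    using assms by (intro map_cong) auto
  then show ?thesis by (rule arg_cong[where f=xt])
qed



lemma main_false:
  fixes m k :: nat and \<epsilon> :: real and xt :: "costfn list \<Rightarrow> alloc"
  assumes m2: "m \<ge> 2" and e: "0 < \<epsilon>" "\<epsilon> < 1/64" and k1: "k \<ge> 1"
    and H1: "\<forall>fs. length fs = k \<longrightarrow> set fs \<subseteq> lip_class m \<longrightarrow> xt fs \<in> alloc_space m (real (m div 2))"
    and H2: "\<forall>(n::nat) (Cost :: nat \<Rightarrow> costfn). n \<ge> k \<longrightarrow> (\<forall>i<n. pb_cost m (Cost i)) \<longrightarrow>
         expected_panel_cost k xt n Cost \<le> social_opt m (real (m div 2)) n Cost + \<epsilon>"
    and small: "real k < real m / (49152 * \<epsilon>\<^sup>2)"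
  shows False
proof -
  define T where "T = m div 2"
  define J where "J = {..<2*T}"
  define \<delta> where "\<delta> = 8 * \<epsilon>"
  define N where "N = nat \<lceil>6 / \<epsilon>\<rceil>"
  define n where "n = k * (N + 1)"
  define P where "P = panels k n"
  define X where "X = (\<lambda>S (\<tau>::nat \<Rightarrow> nat). xt (map (\<lambda>i. costj (\<tau> i)) (sorted_list_of_set S)))"
  define \<Phi> where "\<Phi> = (\<lambda>\<sigma> S. EE (pj T \<delta> \<sigma>) J S (\<lambda>\<omega>. Gs T \<delta> \<sigma> (X S \<omega>)))"
  have T1: "T \<ge> 1" and Tm: "2*T \<le> m"
    using m2 unfolding T_def by auto
  have "m \<le> 3 * T" using m2 unfolding T_def by presburger
  then have mT: "real m \<le> 3 * real T" by linarith
  have d: "0 < \<delta>" "\<delta> \<le> 1/8" using e by (auto simp: \<delta>_def)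
  have q: "real k * \<delta>\<^sup>2 / T \<le> 1/256"
  proof -
    have "real k * \<epsilon>\<^sup>2 < real m / 49152" using small e by (simp add: field_simps)
    also have "\<dots> \<le> 3 * real T / 49152" using mT by simp
    finally have "real k * \<epsilon>\<^sup>2 * 16384 < T" by simp
    then show ?thesis using T1 by (simp add: \<delta>_def field_simps power2_eq_square)
  qed
  have N6: "real N * \<epsilon> \<ge> 6"
  proof -
    have "real N \<ge> 6 / \<epsilon>" unfolding N_def by linarith
    then show ?thesis using e by (simp add: field_simps)
  qed
  have nk: "n \<ge> k" "n \<ge> 1" using k1 by (auto simp: n_def)
  have finP: "finite P" unfolding P_def panels_def by (rule finite_subset[of _ "Pow {..<n}"]) auto
  have PS: "S \<subseteq> {..<n}" "card S = k" "finite S" if "S \<in> P" for S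
    using that unfolding P_def panels_def by (auto intro: finite_subset)
  have kP: "{..<k} \<in> P" using nk unfolding P_def panels_def by auto
  have Pne: "P \<noteq> {}" using kP by auto
  have C0: "card P > 0" using finP Pne by (simp add: card_gt_0_iff)
  have JT: "finite J" "sum (pj T \<delta> \<sigma>) J = 1" for \<sigma> unfolding J_def using pj_sum T1 by auto
  have pnn: "0 \<le> pj T \<delta> \<sigma> j" for \<sigma> j using d by (intro pj_nonneg) auto
  have XA: "X S \<omega> \<in> alloc_space m (real T)" if "S \<in> P" for S \<omega>
  proof -
    have "length (map (\<lambda>i. costj (\<omega> i)) (sorted_list_of_set S)) = k" using PS[OF that] by simp
    moreover have "set (map (\<lambda>i. costj (\<omega> i)) (sorted_list_of_set S)) \<subseteq> lip_class m" using costj_lip by auto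
    ultimately show ?thesis unfolding X_def T_def by (rule H1[rule_format])
  qed
  have core_S: "(\<Sum>\<sigma>\<in>Pow {..<T}. \<Phi> \<sigma> S) \<ge> 2^T * (3*\<delta>/16)" if "S \<in> P" for S
    unfolding \<Phi>_def J_def
    by (rule core[OF T1 Tm d PS(3)[OF that] PS(2)[OF that] XA[OF that] q])
  have per_sigma: "(\<Sum>S\<in>P. (real n - real k) * \<Phi> \<sigma> S - real k) \<le> \<epsilon> * n * card P" for \<sigma>
  proof -
    define \<Psi> where "\<Psi> = (\<lambda>\<tau>. \<Sum>S\<in>P. \<Sum>i<n. xstar T \<sigma> (\<tau> i) - X S \<tau> (\<tau> i))"
    have "\<Psi> \<tau> \<le> \<epsilon> * n * card P" if "\<tau> \<in> PiE {..<n} (\<lambda>_. J)" for \<tau>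
    proof -
      have "expected_panel_cost k xt n (\<lambda>i. costj (\<tau> i)) \<le> social_opt m (real T) n (\<lambda>i. costj (\<tau> i)) + \<epsilon>"
      proof -
        have "\<And>i. i < n \<Longrightarrow> pb_cost m (costj (\<tau> i))" using costj_pb by simp
        from H2[rule_format, of n "\<lambda>i. costj (\<tau> i)", OF nk(1) this] show ?thesis unfolding T_def .
      qed
      from per_instance[OF Tm this nk(2) Pne[unfolded P_def]] show ?thesis
        unfolding \<Psi>_def X_def P_def .
    qed
    then have "EE (pj T \<delta> \<sigma>) J {..<n} \<Psi> \<le> EE (pj T \<delta> \<sigma>) J {..<n} (\<lambda>_. \<epsilon> * n * card P)"
      by (intro EE_mono pnn) auto
    also have "\<dots> = \<epsilon> * n * card P" using EE_const JT by blast
    finally have up: "EE (pj T \<delta> \<sigma>) J {..<n} \<Psi> \<le> \<epsilon> * n * card P" .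
    have lo: "(\<Sum>i<n. EE (pj T \<delta> \<sigma>) J {..<n} (\<lambda>\<tau>. xstar T \<sigma> (\<tau> i) - X S \<tau> (\<tau> i))) \<ge> (real n - real k) * \<Phi> \<sigma> S - real k"
      if SP: "S \<in> P" for S
    proof -
      let ?e = "\<lambda>i. EE (pj T \<delta> \<sigma>) J {..<n} (\<lambda>\<tau>. xstar T \<sigma> (\<tau> i) - X S \<tau> (\<tau> i))"
      have out: "?e i = \<Phi> \<sigma> S" if "i \<in> {..<n} - S" for i
      proof -
        have "?e i = EE (pj T \<delta> \<sigma>) J S (\<lambda>\<omega>. \<Sum>j\<in>J. pj T \<delta> \<sigma> j * (xstar T \<sigma> j - X S \<omega> j))"
          apply (rule indep_step[OF PS(1)[OF SP] _ _ JT, where h="\<lambda>j x. xstar T \<sigma> j - x j"])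
          using that apply simp
          using that apply simp
          unfolding X_def by (rule X_inv[OF PS(3)[OF SP]])
        also have "\<dots> = \<Phi> \<sigma> S"
          unfolding \<Phi>_def Gs_def J_def by (intro arg_cong[where f="EE _ _ _"] ext sum.cong refl) (auto simp: xstar_def)
        finally show ?thesis .
      qed
      have inn: "?e i \<ge> -1" for i
      proof -
        have "?e i \<ge> EE (pj T \<delta> \<sigma>) J {..<n} (\<lambda>_. -1)"
        proof (intro EE_mono pnn)
          fix \<tau>
          have "X S \<tau> (\<tau> i) \<le> 1" using XA[OF SP] cube_le1 by (auto simp: alloc_space_def)
          moreover have "xstar T \<sigma> (\<tau> i) \<ge> 0" by (simp add: xstar_def)
          ultimately show "-1 \<le> xstar T \<sigma> (\<tau> i) - X S \<tau> (\<tau> i)" by linarith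
        qed
        then show ?thesis using EE_const[OF finite_lessThan JT(1) JT(2)] by simp
      qed
      have split: "(\<Sum>i<n. ?e i) = (\<Sum>i\<in>S. ?e i) + (\<Sum>i\<in>{..<n} - S. ?e i)"
        using sum.subset_diff[of S "{..<n}" ?e] PS[OF SP] by simp
      have "(\<Sum>i\<in>S. ?e i) \<ge> (\<Sum>i\<in>S. -1)" using inn by (intro sum_mono) auto
      then have s1: "(\<Sum>i\<in>S. ?e i) \<ge> - real k" using PS[OF SP] by simp
      have "(\<Sum>i\<in>{..<n} - S. ?e i) = real (card ({..<n} - S)) * \<Phi> \<sigma> S" using out by simp
      also have "card ({..<n} - S) = n - k" using PS[OF SP] by (simp add: card_Diff_subset)
      finally have s2: "(\<Sum>i\<in>{..<n} - S. ?e i) = (real n - real k) * \<Phi> \<sigma> S" using nk by (simp add: of_nat_diff)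
      show ?thesis using split s1 s2 by linarith
    qed
    have "EE (pj T \<delta> \<sigma>) J {..<n} \<Psi> = (\<Sum>S\<in>P. \<Sum>i<n. EE (pj T \<delta> \<sigma>) J {..<n} (\<lambda>\<tau>. xstar T \<sigma> (\<tau> i) - X S \<tau> (\<tau> i)))"
      unfolding \<Psi>_def by (simp add: EE_sum)
    also have "\<dots> \<ge> (\<Sum>S\<in>P. (real n - real k) * \<Phi> \<sigma> S - real k)"
      by (intro sum_mono lo)
    finally show ?thesis using up by linarith
  qed
  have "(\<Sum>\<sigma>\<in>Pow {..<T}. \<Sum>S\<in>P. (real n - real k) * \<Phi> \<sigma> S - real k) \<le> (\<Sum>\<sigma>\<in>Pow {..<T}. \<epsilon> * n * card P)"
    by (intro sum_mono per_sigma)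
  also have "\<dots> = 2^T * (\<epsilon> * n * card P)" by (simp add: card_Pow)
  finally have A0: "(\<Sum>\<sigma>\<in>Pow {..<T}. \<Sum>S\<in>P. (real n - real k) * \<Phi> \<sigma> S - real k) \<le> 2^T * (\<epsilon> * n * card P)" .
  have sw: "(\<Sum>\<sigma>\<in>Pow {..<T}. \<Sum>S\<in>P. (real n - real k) * \<Phi> \<sigma> S - real k) =
      (\<Sum>S\<in>P. \<Sum>\<sigma>\<in>Pow {..<T}. (real n - real k) * \<Phi> \<sigma> S - real k)"
    by (rule sum.swap)
  have inner: "(\<Sum>\<sigma>\<in>Pow {..<T}. (real n - real k) * \<Phi> \<sigma> S - real k) =
      (real n - real k) * (\<Sum>\<sigma>\<in>Pow {..<T}. \<Phi> \<sigma> S) - 2^T * real k" for S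
    by (simp add: sum_subtractf sum_distrib_left card_Pow)
  have A1: "(\<Sum>S\<in>P. (real n - real k) * (\<Sum>\<sigma>\<in>Pow {..<T}. \<Phi> \<sigma> S) - 2^T * real k) \<le> 2^T * (\<epsilon> * n * card P)"
    using A0 unfolding sw inner .
  have "(\<Sum>S\<in>P. (real n - real k) * (\<Sum>\<sigma>\<in>Pow {..<T}. \<Phi> \<sigma> S) - 2^T * real k) \<ge>
        (\<Sum>S\<in>P. (real n - real k) * (2^T * (3*\<delta>/16)) - 2^T * real k)"
  proof (intro sum_mono)
    fix S assume "S \<in> P"
    then show "(real n - real k) * (2^T * (3*\<delta>/16)) - 2^T * real k \<le> (real n - real k) * (\<Sum>\<sigma>\<in>Pow {..<T}. \<Phi> \<sigma> S) - 2^T * real k"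
    proof -
      have "(real n - real k) * (2^T * (3*\<delta>/16)) \<le> (real n - real k) * (\<Sum>\<sigma>\<in>Pow {..<T}. \<Phi> \<sigma> S)"
        using core_S[OF \<open>S \<in> P\<close>] nk by (intro mult_left_mono) auto
      then show ?thesis by linarith
    qed
  qed
  with A1 have "card P * ((real n - real k) * (2^T * (3*\<delta>/16)) - 2^T * real k) \<le> card P * (2^T * (\<epsilon> * n))"
    by (simp add: mult_ac)
  then have "(real n - real k) * (2^T * (3*\<delta>/16)) - 2^T * real k \<le> 2^T * (\<epsilon> * n)"
    using C0 by simp
  then have "(2::real)^T * ((real n - real k) * (3*\<delta>/16) - real k) \<le> 2^T * (\<epsilon> * n)"
    by (simp add: algebra_simps)
  then have "(real n - real k) * (3*\<delta>/16) - real k \<le> \<epsilon> * n"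
    by (subst (asm) mult_le_cancel_left_pos) auto
  then have "real k * real N * (3*\<epsilon>/2) - real k \<le> \<epsilon> * real k * (real N + 1)"
    by (simp add: n_def \<delta>_def algebra_simps)
  then have "real k * (real N * \<epsilon> / 2 - 1 - \<epsilon>) \<le> 0" by (simp add: algebra_simps)
  moreover have "real N * \<epsilon> / 2 - 1 - \<epsilon> > 0" using N6 e by simp
  ultimately show False using k1 by (simp add: mult_le_0_iff)
qed


theorem theorem3p3:
  shows "\<exists>c::real. c > 0 \<and>
    (\<forall>(m::nat) (\<epsilon>::real) (k::nat) (xt :: costfn list \<Rightarrow> alloc).
      m \<ge> 2 \<longrightarrow> 0 < \<epsilon> \<longrightarrow> \<epsilon> < 1/64 \<longrightarrow> k \<ge> 1 \<longrightarrow>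
      (\<forall>fs. length fs = k \<longrightarrow> set fs \<subseteq> lip_class m \<longrightarrow>
            xt fs \<in> alloc_space m (real (m div 2))) \<longrightarrow>
      (\<forall>(n::nat) (Cost :: nat \<Rightarrow> costfn). n \<ge> k \<longrightarrow> (\<forall>i<n. pb_cost m (Cost i)) \<longrightarrow>
         expected_panel_cost k xt n Cost
           \<le> social_opt m (real (m div 2)) n Cost + \<epsilon>) \<longrightarrow>
      real k \<ge> c * real m / \<epsilon>^2)"
proof (rule exI[of _ "1/49152"], intro conjI allI impI)
  show "(0::real) < 1/49152" by simp
next
  fix m k :: nat and \<epsilon> :: real and xt :: "costfn list \<Rightarrow> alloc"
  assume a: "m \<ge> 2" "0 < \<epsilon>" "\<epsilon> < 1/64" "k \<ge> 1"
    "\<forall>fs. length fs = k \<longrightarrow> set fs \<subseteq> lip_class m \<longrightarrow> xt fs \<in> alloc_space m (real (m div 2))"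
    "\<forall>(n::nat) (Cost :: nat \<Rightarrow> costfn). n \<ge> k \<longrightarrow> (\<forall>i<n. pb_cost m (Cost i)) \<longrightarrow>
         expected_panel_cost k xt n Cost \<le> social_opt m (real (m div 2)) n Cost + \<epsilon>"
  show "real k \<ge> 1/49152 * real m / \<epsilon>^2"
  proof (rule ccontr)
    assume "\<not> ?thesis"
    then have "real k < real m / (49152 * \<epsilon>\<^sup>2)" by simp
    from main_false[OF a this] show False .
  qed
qed

end
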